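(* In a deterministic interest-rate model (as described in the context), if the long Libor rate $L_{0\infty}$ is finite, then for all $t\ge0$ the long Libor rate $L_{t\infty}$ is finite and is given by $L_{t\infty}=P_{0t}L_{0\infty}$.
   Context: A deterministic interest-rate model is given by a deterministic initial discount function $T\mapsto P_{0T}>0$ ($T\ge0$, $P_{00}=1$), with discount bond prices at later times determined by absence of arbitrage as $P_{tT}=P_{0T}/P_{0t}$ for $0\le t<T$. The Libor rate is defined by $P_{tT}=1/[1+(T-t)L_{tT}]$, and the long Libor rate is $L_{t\infty}=\limsup_{T\to\infty}L_{tT}$. *)

theory Defs
  imports Complex_Main "HOL-Library.Extended_Real" "HOL-Library.Liminf_Limsup"
begin

text \<open>Discount bond price P_tT = P_0T / P_0t, given the initial discount function P.\<close>
definition bond :: "(real \<Rightarrow> real) \<Rightarrow> real \<Rightarrow> real \<Rightarrow> real" where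
  "bond P t T = P T / P t"

text \<open>Libor rate L_tT, defined by P_tT = 1 / (1 + (T - t) L_tT), for T > t.\<close>
definition libor :: "(real \<Rightarrow> real) \<Rightarrow> real \<Rightarrow> real \<Rightarrow> real" where
  "libor P t T = (1 / bond P t T - 1) / (T - t)"

definition long_libor :: "(real \<Rightarrow> real) \<Rightarrow> real \<Rightarrow> ereal" where
  "long_libor P t = Limsup at_top (\<lambda>T. ereal (libor P t T))"

end

theory Submission
  imports Defs
begin

lemma Limsup_perturb:
  fixes f e :: "real \<Rightarrow> real"
  assumes e: "(e \<longlongrightarrow> 0) at_top"
  shows "Limsup at_top (\<lambda>x. ereal (f x + e x)) = Limsup at_top (\<lambda>x. ereal (f x))"
proof (rule antisym)
  show "Limsup at_top (\<lambda>x. ereal (f x + e x)) \<le> Limsup at_top (\<lambda>x. ereal (f x))"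
  proof (rule ereal_le_epsilon2)
    fix d :: real assume d: "0 < d"
    have ev: "eventually (\<lambda>x. \<bar>e x\<bar> < d) at_top"
      using e d by (auto simp: tendsto_iff dist_real_def)
    have "Limsup at_top (\<lambda>x. ereal (f x + e x)) \<le> Limsup at_top (\<lambda>x. ereal (f x) + ereal d)"
      by (rule Limsup_mono) (use ev in \<open>auto elim!: eventually_mono\<close>)
    also have "\<dots> = Limsup at_top (\<lambda>x. ereal (f x)) + ereal d"
      by (rule Limsup_add_ereal_right) auto
    finally show "Limsup at_top (\<lambda>x. ereal (f x + e x)) \<le> Limsup at_top (\<lambda>x. ereal (f x)) + ereal d" .
  qed
  show "Limsup at_top (\<lambda>x. ereal (f x)) \<le> Limsup at_top (\<lambda>x. ereal (f x + e x))"
  proof (rule ereal_le_epsilon2)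
    fix d :: real assume d: "0 < d"
    have ev: "eventually (\<lambda>x. \<bar>e x\<bar> < d) at_top"
      using e d by (auto simp: tendsto_iff dist_real_def)
    have "Limsup at_top (\<lambda>x. ereal (f x)) \<le> Limsup at_top (\<lambda>x. ereal (f x + e x) + ereal d)"
      by (rule Limsup_mono) (use ev in \<open>auto elim!: eventually_mono\<close>)
    also have "\<dots> = Limsup at_top (\<lambda>x. ereal (f x + e x)) + ereal d"
      by (rule Limsup_add_ereal_right) auto
    finally show "Limsup at_top (\<lambda>x. ereal (f x)) \<le> Limsup at_top (\<lambda>x. ereal (f x + e x)) + ereal d" .
  qed
qed

theorem proposition7:
  fixes P :: "real \<Rightarrow> real" and c :: real
  assumes pos: "\<And>T. T \<ge> 0 \<Longrightarrow> P T > 0"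
    and P0: "P 0 = 1"
    and fin: "long_libor P 0 = ereal c"
  shows "\<forall>t\<ge>0. long_libor P t = ereal (P t * c)"
proof (intro allI impI)
  fix t :: real assume t: "t \<ge> 0"
  define k where "k = P t"
  define a where "a = 1 / P t - 1"
  define f where "f = (\<lambda>T. libor P 0 T)"
  define e where "e = (\<lambda>T. (t * f T - a) / (T - t))"
  have k: "k > 0" using pos t by (simp add: k_def)
  have eq: "libor P t T = k * (f T + e T)" if T: "T > t" for T
  proof -
    have PT: "P T > 0" using pos T t by simp
    have T0: "T > 0" using T t by simp
    have "k * (f T + e T) = k * ((1 / P T - 1) / T + (t * ((1 / P T - 1) / T) - (1 / P t - 1)) / (T - t))"
      by (simp add: f_def e_def a_def libor_def bond_def P0)
    also have "\<dots> = (P t / P T - 1) / (T - t)"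
      using PT T0 T k unfolding k_def by (simp add: field_simps)
    finally show ?thesis by (simp add: libor_def bond_def)
  qed
  have up: "eventually (\<lambda>T. f T < c + 1) at_top"
  proof -
    have "Limsup at_top (\<lambda>T. ereal (f T)) \<le> ereal c"
      using fin by (simp add: long_libor_def f_def)
    hence "\<forall>y>ereal c. eventually (\<lambda>T. y > ereal (f T)) at_top"
      unfolding Limsup_le_iff .
    hence "eventually (\<lambda>T. ereal (c+1) > ereal (f T)) at_top"
      by (erule_tac x="ereal (c+1)" in allE) simp
    thus ?thesis by simp
  qed
  have low: "eventually (\<lambda>T. f T \<ge> -1) at_top"
  proof (rule eventually_at_top_linorderI[of 1])
    fix T :: real assume T: "T \<ge> 1"
    have "P T > 0" using pos T by simp
    hence "1 / P T - 1 \<ge> - 1" by simp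
    hence "(1 / P T - 1) / T \<ge> -1 / T" using T divide_right_mono[of "-1" "1 / P T - 1" T] by simp
    moreover have "-1 / T \<ge> -1" using T by (simp add: field_simps)
    ultimately show "f T \<ge> -1" by (simp add: f_def libor_def bond_def P0)
  qed
  define M where "M = t * (\<bar>c\<bar> + 2) + \<bar>a\<bar>"
  have lim0: "((\<lambda>T. 1 / (T - t)) \<longlongrightarrow> 0) at_top"
  proof -
    have "filterlim (\<lambda>T. T - t) at_top at_top"
      using filterlim_tendsto_add_at_top[of "\<lambda>_. -t" "-t" at_top "\<lambda>T. T", OF tendsto_const filterlim_ident]
      by simp
    hence "((\<lambda>T. inverse (T - t)) \<longlongrightarrow> 0) at_top"
      by (rule tendsto_inverse_0_at_top)
    thus ?thesis by (simp add: inverse_eq_divide)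
  qed
  have e0: "(e \<longlongrightarrow> 0) at_top"
  proof (rule tendsto_0_le[OF lim0, of _ M])
    show "eventually (\<lambda>T. norm (e T) \<le> norm (1 / (T - t)) * M) at_top"
      using up low eventually_gt_at_top[of t]
    proof eventually_elim
      case (elim T)
      have "\<bar>f T\<bar> \<le> \<bar>c\<bar> + 2" using elim by auto
      hence "\<bar>t * f T\<bar> \<le> t * (\<bar>c\<bar> + 2)" using t by (simp add: abs_mult mult_left_mono)
      hence num: "\<bar>t * f T - a\<bar> \<le> M" unfolding M_def by linarith
      have "norm (e T) = \<bar>t * f T - a\<bar> / (T - t)" using elim by (simp add: e_def)
      also have "\<dots> \<le> M / (T - t)" using num elim by (simp add: divide_right_mono)
      also have "\<dots> = norm (1 / (T - t)) * M" using elim by simp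
      finally show ?case .
    qed
  qed
  have "long_libor P t = Limsup at_top (\<lambda>T. ereal k * ereal (f T + e T))"
    unfolding long_libor_def
    by (rule Limsup_eq) (use eventually_mono[OF eventually_gt_at_top[of t]] eq in \<open>auto\<close>)
  also have "\<dots> = ereal k * Limsup at_top (\<lambda>T. ereal (f T + e T))"
    by (rule Limsup_ereal_mult_left) (use k in auto)
  also have "\<dots> = ereal k * ereal c"
    using Limsup_perturb[OF e0, of f] fin by (simp add: long_libor_def f_def)
  finally show "long_libor P t = ereal (P t * c)" by (simp add: k_def)
qed

end
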